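(* Let $G=(V,E,\gamma,c)$ be a typed DAG task executed on a platform with $M_s\ge1$ cores of each type $s\in S$ under a work-conserving scheduling algorithm. Let $\pi=(\tau_1,\dots,\tau_k)$ be a critical path of an arbitrary execution sequence of $G$ with finish times $f(\cdot)$. Set $f(\tau_0):=0$; for $1\le i\le k$ let $y_i$ be the total length of the time within $[f(\tau_{i-1}),f(\tau_i))$ during which $\tau_i$ is not executing, and for $s\in S$ let $\mathcal{Y}_s=\sum_{i:\gamma(\tau_i)=s}y_i$. Then for every $s\in S$, \[ \mathcal{Y}_s\le \frac{1}{M_s}\sum_{v\in \mathrm{ivs}(\pi,s)}c(v). \]
   Context: A typed DAG task is $G=(V,E,\gamma,c)$ where $(V,E)$ is a finite directed acyclic graph with a unique source $v_{src}$ and a unique sink $v_{snk}$, $S$ is a finite set of core types, $\gamma:V\to S$ gives the type of each vertex, and $c:V\to\mathbb{R}_{\ge0}$ gives the WCET of each vertex. The platform has $M_s\ge1$ cores of type $s$. $\mathrm{pre}(u)$, $\mathrm{ans}(u)$, $\mathrm{des}(u)$ denote the (immediate) predecessors, ancestors and descendants of $u$. A complete path is a path from $v_{src}$ to $v_{snk}$. For $v\in V$, $\mathrm{par}(v)=\{u\in V: u\ne v,\ \gamma(u)=\gamma(v),\ u\notin \mathrm{ans}(v)\cup\mathrm{des}(v)\}$. For a path $\pi=(\tau_1,\dots,\tau_k)$ and $s\in S$, $\mathrm{ivs}(\pi,s)=\bigcup_{i:\gamma(\tau_i)=s}\mathrm{par}(\tau_i)$. Runtime model: a vertex becomes eligible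 when all its predecessors have finished (the source at time $0$); a vertex $v$ may only execute on cores of type $\gamma(v)$, one core at a time, for a total of at most $c(v)$ time units. Scheduling is work-conserving: an eligible unfinished vertex of type $s$ must be executing whenever some core of type $s$ is available. An execution sequence is a resulting trace; $f(v)$ is the finish time of $v$. A critical path of an execution sequence is a complete path $(\tau_1,\dots,\tau_k)$ with $f(\tau_{i-1})=\max_{u\in\mathrm{pre}(\tau_i)}f(u)$ for all $2\le i\le k$. *)

theory Defs
  imports "HOL-Analysis.Analysis"
begin

definition dag_task :: "'v set \<Rightarrow> ('v \<times> 'v) set \<Rightarrow> 'v \<Rightarrow> 'v \<Rightarrow> bool" where
  "dag_task V E src snk \<longleftrightarrow> finite V \<and> E \<subseteq> V \<times> V \<and> acyclic E \<and> src \<in> V \<and> snk \<in> V \<and>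
     (\<forall>v\<in>V. (\<not>(\<exists>u. (u, v) \<in> E)) \<longleftrightarrow> v = src) \<and>
     (\<forall>v\<in>V. (\<not>(\<exists>w. (v, w) \<in> E)) \<longleftrightarrow> v = snk)"

definition pre :: "('v \<times> 'v) set \<Rightarrow> 'v \<Rightarrow> 'v set" where
  "pre E v = {u. (u, v) \<in> E}"

definition ans :: "('v \<times> 'v) set \<Rightarrow> 'v \<Rightarrow> 'v set" where
  "ans E v = {u. (u, v) \<in> E\<^sup>+}"

definition des :: "('v \<times> 'v) set \<Rightarrow> 'v \<Rightarrow> 'v set" where
  "des E v = {w. (v, w) \<in> E\<^sup>+}"

definition par :: "'v set \<Rightarrow> ('v \<times> 'v) set \<Rightarrow> ('v \<Rightarrow> 's) \<Rightarrow> 'v \<Rightarrow> 'v set" where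
  "par V E \<gamma> v = {u \<in> V. u \<noteq> v \<and> \<gamma> u = \<gamma> v \<and> u \<notin> ans E v \<union> des E v}"

text \<open>Paths are nonempty vertex lists (\<tau>_1,...,\<tau>_k) = (\<pi>!0,...,\<pi>!(k-1)).\<close>
definition complete_path :: "('v \<times> 'v) set \<Rightarrow> 'v \<Rightarrow> 'v \<Rightarrow> 'v list \<Rightarrow> bool" where
  "complete_path E src snk \<pi> \<longleftrightarrow> \<pi> \<noteq> [] \<and> hd \<pi> = src \<and> last \<pi> = snk \<and>
     (\<forall>i. Suc i < length \<pi> \<longrightarrow> (\<pi> ! i, \<pi> ! Suc i) \<in> E)"

definition ivs :: "'v set \<Rightarrow> ('v \<times> 'v) set \<Rightarrow> ('v \<Rightarrow> 's) \<Rightarrow> 'v list \<Rightarrow> 's \<Rightarrow> 'v set" where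
  "ivs V E \<gamma> \<pi> s = (\<Union>i \<in> {i. i < length \<pi> \<and> \<gamma> (\<pi> ! i) = s}. par V E \<gamma> (\<pi> ! i))"

definition elig :: "('v \<times> 'v) set \<Rightarrow> ('v \<Rightarrow> real) \<Rightarrow> 'v \<Rightarrow> real" where
  "elig E f v = (if pre E v = {} then 0 else Max (f ` pre E v))"

text \<open>An execution sequence: run t is the set of vertices executing at time t,
  f v the finish time of v.  Each executing vertex occupies one core of its type.\<close>
definition exec_seq :: "'v set \<Rightarrow> ('v \<times> 'v) set \<Rightarrow> ('v \<Rightarrow> 's) \<Rightarrow> ('v \<Rightarrow> real) \<Rightarrow> ('s \<Rightarrow> nat)
     \<Rightarrow> (real \<Rightarrow> 'v set) \<Rightarrow> ('v \<Rightarrow> real) \<Rightarrow> bool" where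
  "exec_seq V E \<gamma> c M run f \<longleftrightarrow>
     (\<forall>t. run t \<subseteq> V) \<and>
     (\<forall>v\<in>V. {t. v \<in> run t} \<in> sets lborel) \<and>
     (\<forall>v\<in>V. emeasure lborel {t. v \<in> run t} \<le> ennreal (c v)) \<and>
     (\<forall>v\<in>V. elig E f v \<le> f v) \<and>
     (\<forall>t v. v \<in> run t \<longrightarrow> elig E f v \<le> t \<and> t < f v) \<and>
     (\<forall>t s. card {u \<in> run t. \<gamma> u = s} \<le> M s) \<and>
     (\<forall>t. \<forall>v\<in>V. elig E f v \<le> t \<and> t < f v \<and> v \<notin> run t \<longrightarrow>
          card {u \<in> run t. \<gamma> u = \<gamma> v} = M (\<gamma> v))"

definition critical_path :: "('v \<times> 'v) set \<Rightarrow> 'v \<Rightarrow> 'v \<Rightarrow> ('v \<Rightarrow> real) \<Rightarrow> 'v list \<Rightarrow> bool" where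
  "critical_path E src snk f \<pi> \<longleftrightarrow> complete_path E src snk \<pi> \<and>
     (\<forall>i. Suc i < length \<pi> \<longrightarrow> f (\<pi> ! i) = Max (f ` pre E (\<pi> ! Suc i)))"

text \<open>y_i for the (0-indexed) i-th path vertex: measure of the time in
  [f(previous vertex), f(\<pi>!i)) during which \<pi>!i is not executing; f(\<tau>_0) = 0.\<close>
definition ywait :: "(real \<Rightarrow> 'v set) \<Rightarrow> ('v \<Rightarrow> real) \<Rightarrow> 'v list \<Rightarrow> nat \<Rightarrow> real" where
  "ywait run f \<pi> i =
     measure lborel {t. (if i = 0 then 0 else f (\<pi> ! (i - 1))) \<le> t \<and> t < f (\<pi> ! i) \<and> \<pi> ! i \<notin> run t}"

definition Ytot :: "('v \<Rightarrow> 's) \<Rightarrow> (real \<Rightarrow> 'v set) \<Rightarrow> ('v \<Rightarrow> real) \<Rightarrow> 'v list \<Rightarrow> 's \<Rightarrow> real" where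
  "Ytot \<gamma> run f \<pi> s = (\<Sum>i | i < length \<pi> \<and> \<gamma> (\<pi> ! i) = s. ywait run f \<pi> i)"

end

theory Submission
  imports Defs
begin

lemma anc_le:
  assumes EV: "E \<subseteq> V \<times> V" and fin: "finite V" and el: "\<forall>v\<in>V. elig E f v \<le> f v"
    and xy: "(x, y) \<in> E\<^sup>+"
  shows "f x \<le> elig E f y"
  using xy
proof (induction rule: trancl_induct)
  case (base y)
  have "pre E y \<subseteq> V" using EV by (auto simp: pre_def)
  hence "finite (pre E y)" using fin finite_subset by blast
  moreover have "x \<in> pre E y" using base by (simp add: pre_def)
  ultimately show ?case unfolding elig_def by (auto intro!: Max_ge)
next
  case (step y z)
  have yV: "y \<in> V" using step(2) EV by auto
  have "pre E z \<subseteq> V" using EV by (auto simp: pre_def)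
  hence "finite (pre E z)" using fin finite_subset by blast
  moreover have "y \<in> pre E z" using step by (simp add: pre_def)
  ultimately have "f y \<le> elig E f z" unfolding elig_def by (auto intro!: Max_ge)
  moreover have "elig E f y \<le> f y" using el yV by auto
  ultimately show ?case using step(3) by linarith
qed

theorem lemma2:
  fixes V :: "'v set" and E :: "('v \<times> 'v) set" and src snk :: 'v
    and S :: "'s set" and \<gamma> :: "'v \<Rightarrow> 's" and c :: "'v \<Rightarrow> real" and M :: "'s \<Rightarrow> nat"
    and run :: "real \<Rightarrow> 'v set" and f :: "'v \<Rightarrow> real" and \<pi> :: "'v list"
  assumes "dag_task V E src snk"
    and "finite S" and "\<forall>v\<in>V. \<gamma> v \<in> S"
    and "\<forall>v\<in>V. c v \<ge> 0"
    and "\<forall>s\<in>S. M s \<ge> 1"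
    and "exec_seq V E \<gamma> c M run f"
    and "critical_path E src snk f \<pi>"
  shows "\<forall>s\<in>S. Ytot \<gamma> run f \<pi> s \<le> (1 / real (M s)) * (\<Sum>v\<in>ivs V E \<gamma> \<pi> s. c v)"
proof
  fix s assume sS: "s \<in> S"
  have finV: "finite V" and EV: "E \<subseteq> V \<times> V" and srcV: "src \<in> V"
    and srcpre: "\<forall>v\<in>V. (\<not>(\<exists>u. (u, v) \<in> E)) \<longleftrightarrow> v = src"
    using assms(1) unfolding dag_task_def by auto
  have runV: "\<And>t. run t \<subseteq> V" and Rmeas: "\<And>v. v \<in> V \<Longrightarrow> {t. v \<in> run t} \<in> sets lborel"
    and Rc: "\<And>v. v \<in> V \<Longrightarrow> emeasure lborel {t. v \<in> run t} \<le> ennreal (c v)"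
    and el: "\<forall>v\<in>V. elig E f v \<le> f v"
    and runel: "\<And>t v. v \<in> run t \<Longrightarrow> elig E f v \<le> t \<and> t < f v"
    and wc: "\<And>t v. v \<in> V \<Longrightarrow> elig E f v \<le> t \<Longrightarrow> t < f v \<Longrightarrow> v \<notin> run t \<Longrightarrow>
          card {u \<in> run t. \<gamma> u = \<gamma> v} = M (\<gamma> v)"
    using assms(6) unfolding exec_seq_def by auto
  have ne: "\<pi> \<noteq> []" and hd: "hd \<pi> = src"
    and edge: "\<And>i. Suc i < length \<pi> \<Longrightarrow> (\<pi> ! i, \<pi> ! Suc i) \<in> E"
    and crit: "\<And>i. Suc i < length \<pi> \<Longrightarrow> f (\<pi> ! i) = Max (f ` pre E (\<pi> ! Suc i))"
    using assms(7) unfolding critical_path_def complete_path_def by auto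
  have piV: "\<pi> ! i \<in> V" if "i < length \<pi>" for i
  proof (cases i)
    case 0 then show ?thesis using ne hd srcV by (simp add: hd_conv_nth)
  next
    case (Suc j) then show ?thesis using edge[of j] that EV by auto
  qed
  define a where "a i = (if i = 0 then 0 else f (\<pi> ! (i - 1)))" for i
  have a_elig: "a i = elig E f (\<pi> ! i)" if "i < length \<pi>" for i
  proof (cases i)
    case 0
    have "pre E src = {}" using srcpre srcV by (auto simp: pre_def)
    then show ?thesis using 0 ne hd by (simp add: a_def elig_def hd_conv_nth)
  next
    case (Suc j)
    have "\<pi> ! j \<in> pre E (\<pi> ! i)" using edge[of j] that Suc by (simp add: pre_def)
    hence "pre E (\<pi> ! i) \<noteq> {}" by auto
    then show ?thesis using crit[of j] that Suc by (simp add: a_def elig_def)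
  qed
  have step_mono: "f (\<pi> ! j) \<le> f (\<pi> ! Suc j)" if "Suc j < length \<pi>" for j
    using a_elig[of "Suc j"] el piV[of "Suc j"] that by (simp add: a_def)
  have mono: "f (\<pi> ! i) \<le> f (\<pi> ! (i + d))" if "i + d < length \<pi>" for i d
    using that
  proof (induction d)
    case 0 then show ?case by simp
  next
    case (Suc d)
    then have "f (\<pi> ! i) \<le> f (\<pi> ! (i + d))" by simp
    also have "\<dots> \<le> f (\<pi> ! Suc (i + d))" using step_mono Suc.prems by simp
    finally show ?case by simp
  qed
  define I where "I = {i. i < length \<pi> \<and> \<gamma> (\<pi> ! i) = s}"
  define W where "W i = {t. a i \<le> t \<and> t < f (\<pi> ! i) \<and> \<pi> ! i \<notin> run t}" for i
  define P where "P = ivs V E \<gamma> \<pi> s"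
  have finI: "finite I" unfolding I_def by auto
  have PV: "P \<subseteq> V" unfolding P_def ivs_def par_def by auto
  have finP: "finite P" using PV finV finite_subset by blast
  have Wmeas: "W i \<in> sets lborel" if "i < length \<pi>" for i
  proof -
    have "W i = {a i..<f (\<pi> ! i)} \<inter> (UNIV - {t. \<pi> ! i \<in> run t})"
      unfolding W_def by auto
    then show ?thesis using Rmeas[OF piV[OF that]] by auto
  qed
  have Wfin: "emeasure lborel (W i) \<noteq> \<infinity>" if "i < length \<pi>" for i
  proof -
    have "W i \<subseteq> {a i..<f (\<pi> ! i)}" unfolding W_def by auto
    hence "emeasure lborel (W i) \<le> emeasure lborel {a i..<f (\<pi> ! i)}"
      by (intro emeasure_mono) auto
    also have "\<dots> < \<infinity>" by (cases "a i \<le> f (\<pi> ! i)") auto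
    finally show ?thesis by simp
  qed
  have disj: "disjoint_family_on W I"
  proof (unfold disjoint_family_on_def, intro ballI impI)
    have aux: "W i \<inter> W j = {}" if "i < j" "j < length \<pi>" for i j
    proof -
      have "f (\<pi> ! i) \<le> f (\<pi> ! (i + (j - 1 - i)))" using that by (intro mono) auto
      hence "f (\<pi> ! i) \<le> a j" using that by (simp add: a_def)
      thus ?thesis unfolding W_def by auto
    qed
    fix i j assume "i \<in> I" "j \<in> I" "i \<noteq> j"
    then have "i < j \<or> j < i" "i < length \<pi>" "j < length \<pi>" unfolding I_def by auto
    then show "W i \<inter> W j = {}" using aux[of i j] aux[of j i] by blast
  qed
  have point: "real (M s) \<le> real (card {u \<in> P. u \<in> run t})" if tU: "t \<in> (\<Union>i\<in>I. W i)" for t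
  proof -
    obtain i where iI: "i \<in> I" and tW: "t \<in> W i" using tU by auto
    have il: "i < length \<pi>" and gs: "\<gamma> (\<pi> ! i) = s" using iI unfolding I_def by auto
    let ?v = "\<pi> ! i"
    have vV: "?v \<in> V" using piV il .
    have t1: "elig E f ?v \<le> t" "t < f ?v" "?v \<notin> run t"
      using tW a_elig[OF il] unfolding W_def by auto
    have cardM: "card {u \<in> run t. \<gamma> u = s} = M s" using wc[OF vV t1] gs by simp
    have sub: "{u \<in> run t. \<gamma> u = s} \<subseteq> {u \<in> P. u \<in> run t}"
    proof
      fix u assume u: "u \<in> {u \<in> run t. \<gamma> u = s}"
      have uV: "u \<in> V" using u runV by auto
      have ru: "elig E f u \<le> t" "t < f u" using runel u by auto
      have "u \<noteq> ?v" using u t1 by auto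
      moreover have "u \<notin> ans E ?v"
      proof
        assume "u \<in> ans E ?v"
        hence "f u \<le> elig E f ?v" using anc_le[OF EV finV el] by (simp add: ans_def)
        thus False using ru t1 by linarith
      qed
      moreover have "u \<notin> des E ?v"
      proof
        assume "u \<in> des E ?v"
        hence "f ?v \<le> elig E f u" using anc_le[OF EV finV el] by (simp add: des_def)
        thus False using ru t1 by linarith
      qed
      ultimately have "u \<in> par V E \<gamma> ?v" using u uV gs unfolding par_def by auto
      hence "u \<in> P" unfolding P_def ivs_def using il gs by auto
      thus "u \<in> {u \<in> P. u \<in> run t}" using u by auto
    qed
    have "card {u \<in> run t. \<gamma> u = s} \<le> card {u \<in> P. u \<in> run t}"
      using finP by (intro card_mono[OF _ sub]) auto
    thus ?thesis using cardM by simp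
  qed
  define U where "U = (\<Union>i\<in>I. W i)"
  have Umeas: "U \<in> sets lborel" unfolding U_def using Wmeas finI I_def by auto
  have sumU: "(\<Sum>i\<in>I. emeasure lborel (W i)) = emeasure lborel U"
    unfolding U_def using Wmeas disj finI by (intro sum_emeasure) (auto simp: I_def)
  have Ufin: "emeasure lborel U \<noteq> \<infinity>"
  proof -
    have "(\<Sum>i\<in>I. emeasure lborel (W i)) < \<infinity>"
      using Wfin by (auto simp: I_def less_top sum_Pinfty)
    thus ?thesis using sumU by simp
  qed
  have measU: "measure lborel U = (\<Sum>i\<in>I. measure lborel (W i))"
    unfolding U_def using Wmeas disj finI Wfin
    by (intro measure_finite_Union) (auto simp: I_def)
  have Ytot_eq: "Ytot \<gamma> run f \<pi> s = measure lborel U"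
    unfolding measU Ytot_def I_def ywait_def W_def a_def by simp
  have pt2: "ennreal (real (M s)) * indicator U t \<le> (\<Sum>u\<in>P. indicator {t. u \<in> run t} t)" for t
  proof (cases "t \<in> U")
    case True
    have "(\<Sum>u\<in>P. indicator {t. u \<in> run t} t :: ennreal) = (\<Sum>u\<in>{u \<in> P. u \<in> run t}. 1)"
      using finP by (simp add: indicator_def sum.If_cases Int_def)
    also have "\<dots> = of_nat (card {u \<in> P. u \<in> run t})" by simp
    finally show ?thesis using True point[of t] unfolding U_def
      by (simp add: ennreal_of_nat_eq_real_of_nat)
  next
    case False then show ?thesis by simp
  qed
  have "ennreal (real (M s)) * emeasure lborel U
      = (\<integral>\<^sup>+ t. ennreal (real (M s)) * indicator U t \<partial>lborel)"
    using Umeas by (simp add: nn_integral_cmult_indicator)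
  also have "\<dots> \<le> (\<integral>\<^sup>+ t. (\<Sum>u\<in>P. indicator {t. u \<in> run t} t) \<partial>lborel)"
    by (intro nn_integral_mono pt2)
  also have "\<dots> = (\<Sum>u\<in>P. emeasure lborel {t. u \<in> run t})"
    using PV Rmeas by (subst nn_integral_sum) (auto intro!: sum.cong nn_integral_indicator)
  also have "\<dots> \<le> (\<Sum>u\<in>P. ennreal (c u))"
    using PV Rc by (intro sum_mono) auto
  also have "\<dots> = ennreal (\<Sum>u\<in>P. c u)"
    using PV assms(4) by (subst sum_ennreal) auto
  finally have "ennreal (real (M s) * measure lborel U) \<le> ennreal (\<Sum>u\<in>P. c u)"
    using Ufin by (simp add: emeasure_eq_ennreal_measure ennreal_mult)
  moreover have "0 \<le> (\<Sum>u\<in>P. c u)" using PV assms(4) by (intro sum_nonneg) auto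
  ultimately have key: "real (M s) * measure lborel U \<le> (\<Sum>u\<in>P. c u)"
    by (simp add: ennreal_le_iff)
  have Mpos: "real (M s) > 0" using assms(5) sS by (simp add: Suc_le_eq)
  have "measure lborel U \<le> (\<Sum>u\<in>P. c u) / real (M s)"
    using key Mpos by (simp add: field_simps)
  thus "Ytot \<gamma> run f \<pi> s \<le> (1 / real (M s)) * (\<Sum>v\<in>ivs V E \<gamma> \<pi> s. c v)"
    using Ytot_eq P_def by simp
qed

end
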